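(* Let $(\Omega,\mathcal{F},\mathbb{P})$ be a nonatomic probability space and $(\Phi,\Psi)$ an Orlicz pair as in the context. For every $X\in L^\Phi$ there exists a sequence $(\pi_n)\subset\Pi$ such that $\mathbb{E}[X|\pi_n]$ order converges to $X$ in $L^\Phi$; that is, $\mathbb{E}[X|\pi_n]\to X$ a.s. and there is $Z\in L^\Phi$ with $|\mathbb{E}[X|\pi_n]|\le Z$ for all $n$.
   Context: $(\Omega,\mathcal{F},\mathbb{P})$ is a nonatomic probability space. An Orlicz function is a convex, increasing $\Phi:[0,\infty)\to[0,\infty)$ with $\Phi(0)=0$; its conjugate is $\Psi(s)=\sup_{t\ge0}(ts-\Phi(t))$. Standing assumption: $\Phi(t)>0$ for $t>0$ and $\lim_{t\to\infty}\Phi(t)/t=\infty$. $L^\Phi$ is the space of random variables $X$ (mod a.s. equality) with $\|X\|_\Phi:=\inf\{\lambda>0:\mathbb{E}[\Phi(|X|/\lambda)]\le 1\}<\infty$. $\Pi$ denotes the set of all finite measurable partitions of $\Omega$ whose members all have nonzero probability; $\mathbb{E}[X|\pi]:=\mathbb{E}[X|\sigma(\pi)]$. For sequences in $L^\Phi$, order convergence $X_n\to X$ is equivalent to a.s. convergence together with domination $|X_n|\le Z$ for some $Z\in L^\Phi$. *)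

theory Defs
  imports "HOL-Probability.Probability"
begin

definition nonatomic :: "'a measure \<Rightarrow> bool" where
  "nonatomic M \<longleftrightarrow> (\<forall>A\<in>sets M. measure M A > 0 \<longrightarrow>
      (\<exists>B\<in>sets M. B \<subseteq> A \<and> 0 < measure M B \<and> measure M B < measure M A))"

definition orlicz_function :: "(real \<Rightarrow> real) \<Rightarrow> bool" where
  "orlicz_function \<Phi> \<longleftrightarrow>
     convex_on {0..} \<Phi> \<and> mono_on {0..} \<Phi> \<and> \<Phi> 0 = 0 \<and>
     (\<forall>t>0. \<Phi> t > 0) \<and> filterlim (\<lambda>t. \<Phi> t / t) at_top at_top"

text \<open>Membership in the Orlicz space: X measurable and the Luxemburg norm
inf{\<lambda>>0. E[Phi(|X|/\<lambda>)] \<le> 1} is finite, i.e. some \<lambda>>0 is admissible.\<close>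
definition in_orlicz :: "'a measure \<Rightarrow> (real \<Rightarrow> real) \<Rightarrow> ('a \<Rightarrow> real) \<Rightarrow> bool" where
  "in_orlicz M \<Phi> X \<longleftrightarrow> X \<in> borel_measurable M \<and>
     (\<exists>c>0. (\<integral>\<^sup>+ \<omega>. ennreal (\<Phi> (\<bar>X \<omega>\<bar> / c)) \<partial>M) \<le> 1)"

definition fin_partitions :: "'a measure \<Rightarrow> 'a set set set" where
  "fin_partitions M = {P. finite P \<and> P \<subseteq> sets M \<and> (\<forall>A\<in>P. measure M A > 0) \<and>
      disjoint P \<and> \<Union>P = space M}"

definition cond_exp_part :: "'a measure \<Rightarrow> 'a set set \<Rightarrow> ('a \<Rightarrow> real) \<Rightarrow> 'a \<Rightarrow> real" where
  "cond_exp_part M P X = real_cond_exp M (sigma (space M) P) X"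

end

theory Submission
  imports Defs
begin


lemma sigma_sets_partition_split:
  assumes "S \<in> sigma_sets \<Omega> P" "disjoint P" "\<Union>P = \<Omega>"
  shows "\<forall>B\<in>P. B \<subseteq> S \<or> B \<inter> S = {}"
  using assms(1)
proof (induction rule: sigma_sets.induct)
  case (Basic a)
  then show ?case using assms(2) unfolding disjoint_def by blast
next
  case Empty
  then show ?case by auto
next
  case (Compl a)
  then show ?case using assms(3) by blast
next
  case (Union a)
  then show ?case by blast
qed

lemma set_integral_partition_sum:
  fixes h :: "'a \<Rightarrow> real"
  assumes "finite Q" "Q \<subseteq> sets M" "disjoint Q" "integrable M h"
  shows "(\<integral>x\<in>\<Union>Q. h x \<partial>M) = (\<Sum>B\<in>Q. (\<integral>x\<in>B. h x \<partial>M))"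
proof -
  have ind: "indicator (\<Union>Q) x = (\<Sum>B\<in>Q. indicator B x :: real)" for x
  proof (cases "x \<in> \<Union>Q")
    case True
    then obtain B where B: "B \<in> Q" "x \<in> B" by auto
    have "(\<Sum>B'\<in>Q. indicator B' x :: real) = (\<Sum>B'\<in>Q. if B' = B then 1 else 0)"
      using B assms(3) unfolding disjoint_def
      by (intro sum.cong) (auto simp: indicator_def)
    also have "\<dots> = 1" using B assms(1) by simp
    finally show ?thesis using True by simp
  next
    case False
    then show ?thesis by (auto simp: indicator_def intro!: sum.neutral)
  qed
  have "(\<integral>x\<in>\<Union>Q. h x \<partial>M) = (\<integral>x. (\<Sum>B\<in>Q. indicator B x * h x) \<partial>M)"
    unfolding set_lebesgue_integral_def by (simp add: ind sum_distrib_right)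
  also have "\<dots> = (\<Sum>B\<in>Q. (\<integral>x. indicator B x * h x \<partial>M))"
    by (rule Bochner_Integration.integral_sum) (use assms integrable_real_mult_indicator[of _ M h] in \<open>auto simp: mult.commute\<close>)
  finally show ?thesis unfolding set_lebesgue_integral_def by simp
qed

lemma partition_cond_exp:
  assumes PS: "prob_space M" and P: "P \<in> fin_partitions M" and X: "integrable M X"
  shows "AE \<omega> in M. \<forall>A\<in>P. \<omega> \<in> A \<longrightarrow> cond_exp_part M P X \<omega> = (\<integral>x\<in>A. X x \<partial>M) / measure M A"
proof -
  interpret prob_space M by fact
  have Pf: "finite P" and Ps: "P \<subseteq> sets M" and Ppos: "\<And>A. A \<in> P \<Longrightarrow> measure M A > 0"
    and Pd: "disjoint P" and Pu: "\<Union>P = space M"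
    using P unfolding fin_partitions_def by auto
  define F where "F = sigma (space M) P"
  have PP: "P \<subseteq> Pow (space M)" using Ps sets.sets_into_space by auto
  have sF: "sets F = sigma_sets (space M) P" unfolding F_def using PP by (simp add: sets_measure_of)
  have spF: "space F = space M" unfolding F_def using PP by simp
  have subalg: "subalgebra M F"
    unfolding subalgebra_def using sF spF sets.sigma_sets_subset[OF Ps] by auto
  interpret finite_measure_subalgebra M F
    by unfold_locales (rule subalg)
  define avg where "avg A = (\<integral>x\<in>A. X x \<partial>M) / measure M A" for A
  define g where "g \<omega> = (\<Sum>A\<in>P. avg A * indicator A \<omega>)" for \<omega>
  have PF: "A \<in> sets F" if "A \<in> P" for A using that sF by auto
  have gF: "g \<in> borel_measurable F"
    unfolding g_def using PF by (intro borel_measurable_sum) (auto intro!: borel_measurable_indicator)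
  have gM: "g \<in> borel_measurable M"
    unfolding g_def using Ps by (intro borel_measurable_sum) auto
  have gint: "integrable M g"
    unfolding g_def using Ps by (intro Bochner_Integration.integrable_sum integrable_mult_right) (auto simp: less_top[symmetric])
  have g_on: "g \<omega> = avg A" if "A \<in> P" "\<omega> \<in> A" for A \<omega>
  proof -
    have "g \<omega> = (\<Sum>A'\<in>P. if A' = A then avg A else 0)"
      unfolding g_def using that Pd unfolding disjoint_def
      by (intro sum.cong) (auto simp: indicator_def)
    then show ?thesis using that Pf by simp
  qed
  have onB: "(\<integral>x\<in>B. X x \<partial>M) = (\<integral>x\<in>B. g x \<partial>M)" if B: "B \<in> P" for B
  proof -
    have "(\<integral>x\<in>B. g x \<partial>M) = (\<integral>x\<in>B. avg B \<partial>M)"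
      using g_on[OF B] by (intro set_lebesgue_integral_cong) (use B Ps in auto)
    also have "\<dots> = avg B * measure M B" using B Ps by (subst set_integral_const) auto
    also have "\<dots> = (\<integral>x\<in>B. X x \<partial>M)" unfolding avg_def using Ppos[OF B] by simp
    finally show ?thesis by simp
  qed
  have "AE x in M. real_cond_exp M F X x = g x"
  proof (rule real_cond_exp_charact)
    fix S assume "S \<in> sets F"
    then have S: "S \<in> sigma_sets (space M) P" using sF by simp
    have split: "\<forall>B\<in>P. B \<subseteq> S \<or> B \<inter> S = {}"
      by (rule sigma_sets_partition_split[OF S Pd Pu])
    have Ssp: "S \<subseteq> space M" using sigma_sets_into_sp[OF PP S] .
    define Q where "Q = {B\<in>P. B \<subseteq> S}"
    have SQ: "S = \<Union>Q" using split Ssp Pu unfolding Q_def by blast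
    have Qf: "finite Q" "Q \<subseteq> sets M" "disjoint Q"
      using Pf Ps Pd unfolding Q_def disjoint_def by auto
    show "(\<integral>x\<in>S. X x \<partial>M) = (\<integral>x\<in>S. g x \<partial>M)"
      unfolding SQ set_integral_partition_sum[OF Qf X] set_integral_partition_sum[OF Qf gint]
      using onB unfolding Q_def by (intro sum.cong) auto
  qed (use X gint gF in auto)
  then show ?thesis
    by eventually_elim (auto simp: cond_exp_part_def F_def g_on avg_def)
qed

lemma index_partition_cond_exp:
  fixes f :: "'a \<Rightarrow> 'i"
  assumes PS: "prob_space M" and I: "finite I" and fI: "\<And>\<omega>. \<omega> \<in> space M \<Longrightarrow> f \<omega> \<in> I"
    and Cs: "\<And>i. {\<omega>\<in>space M. f \<omega> = i} \<in> sets M" and X: "integrable M X"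
  shows "\<exists>P\<in>fin_partitions M. AE \<omega> in M. measure M {y\<in>space M. f y = f \<omega>} > 0 \<and> cond_exp_part M P X \<omega> =
     (\<integral>x\<in>{y\<in>space M. f y = f \<omega>}. X x \<partial>M) / measure M {y\<in>space M. f y = f \<omega>}"
proof -
  interpret prob_space M by fact
  define C where "C i = {\<omega>\<in>space M. f \<omega> = i}" for i
  define J where "J = {i\<in>I. measure M (C i) > 0}"
  define N where "N = (\<Union>i\<in>I-J. C i)"
  have Cs': "C i \<in> sets M" for i unfolding C_def by (rule Cs)
  have Cnull: "C i \<in> null_sets M" if "i \<in> I - J" for i
  proof -
    have "measure M (C i) = 0" using that unfolding J_def by (auto simp: measure_nonneg less_le)
    then show ?thesis using Cs'[of i] by (auto simp: emeasure_eq_measure)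
  qed
  have Nnull: "N \<in> null_sets M" unfolding N_def
    using I Cnull by (intro null_sets_UN') (auto intro: countable_finite)
  have spC: "space M = (\<Union>i\<in>I. C i)" using fI unfolding C_def by auto
  have "J \<noteq> {}"
  proof
    assume "J = {}"
    then have "space M = N" unfolding N_def spC by simp
    then have "measure M (space M) = 0" using Nnull by (simp add: measure_eq_0_null_sets)
    then show False using prob_space by linarith
  qed
  then obtain j0 where j0: "j0 \<in> J" by auto
  define D where "D i = (if i = j0 then C i \<union> N else C i)" for i
  define P where "P = D ` J"
  have Ds: "D i \<in> sets M" for i unfolding D_def using Cs' Nnull by auto
  have Dpos: "measure M (D i) > 0" if "i \<in> J" for i
  proof -
    have "measure M (D i) = measure M (C i)"
      unfolding D_def using Cs' Nnull by (auto simp: measure_Un_null_set)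
    then show ?thesis using that unfolding J_def by simp
  qed
  have NC: "N \<inter> C i = {}" if "i \<in> J" for i
    using that unfolding N_def C_def by auto
  have CD: "C i \<subseteq> D i" for i unfolding D_def by simp
  have DC: "D i \<subseteq> C i \<union> N" for i unfolding D_def by simp
  have Pfin: "finite P" unfolding P_def J_def using I by simp
  have Psets: "P \<subseteq> sets M" unfolding P_def using Ds by blast
  have Ppos: "\<forall>A\<in>P. 0 < measure M A" unfolding P_def using Dpos by blast
  have Pdisj: "disjoint P" unfolding P_def disjoint_def
  proof (intro ballI impI)
    fix A B assume AB: "A \<in> D ` J" "B \<in> D ` J" "A \<noteq> B"
    then obtain i k where ik: "i \<in> J" "k \<in> J" "A = D i" "B = D k" by blast
    then have "i \<noteq> k" using AB(3) by blast
    then have Cik: "C i \<inter> C k = {}" unfolding C_def by blast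
    have "D i \<subseteq> C i \<union> N" "D k \<subseteq> C k \<union> N" unfolding D_def by simp_all
    moreover have "N \<inter> C i = {}" "N \<inter> C k = {}" using NC ik by simp_all
    moreover have "N \<inter> D i \<inter> D k = {}"
    proof -
      have "i \<noteq> j0 \<or> k \<noteq> j0" using \<open>i \<noteq> k\<close> by blast
      moreover have "D i = C i" if "i \<noteq> j0" for i using that unfolding D_def by simp
      ultimately have "D i \<inter> N = {} \<or> D k \<inter> N = {}"
        using NC ik by (metis inf_commute)
      then show ?thesis by blast
    qed
    ultimately have "D i \<inter> D k = {}" using Cik by blast
    then show "A \<inter> B = {}" using ik by simp
  qed
  have Pun: "\<Union>P = space M"
  proof
    show "\<Union>P \<subseteq> space M" using Psets sets.sets_into_space by blast
    show "space M \<subseteq> \<Union>P"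
    proof
      fix x assume x: "x \<in> space M"
      then have fx: "f x \<in> I" "x \<in> C (f x)" using fI unfolding C_def by auto
      show "x \<in> \<Union>P"
      proof (cases "f x \<in> J")
        case True
        then have "D (f x) \<in> P" unfolding P_def by blast
        moreover have "x \<in> D (f x)" using fx CD by blast
        ultimately show ?thesis by blast
      next
        case False
        then have "x \<in> N" using fx unfolding N_def by blast
        then have "x \<in> D j0" unfolding D_def by simp
        moreover have "D j0 \<in> P" using j0 unfolding P_def by blast
        ultimately show ?thesis by blast
      qed
    qed
  qed
  have P: "P \<in> fin_partitions M"
    unfolding fin_partitions_def using Pfin Psets Ppos Pdisj Pun by blast
  have avgD: "(\<integral>x\<in>D i. X x \<partial>M) / measure M (D i) = (\<integral>x\<in>C i. X x \<partial>M) / measure M (C i)" for i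
  proof -
    have m: "measure M (D i) = measure M (C i)"
      unfolding D_def using Cs' Nnull by (auto simp: measure_Un_null_set)
    have s1: "D i - C i \<subseteq> N" using DC[of i] by auto
    have s2: "C i - D i = {}" using CD[of i] by auto
    have "(D i - C i) \<union> (C i - D i) \<subseteq> N" unfolding s2 using s1 by simp
    moreover have "(D i - C i) \<union> (C i - D i) \<in> sets M"
      using Ds[of i] Cs'[of i] by (intro sets.Un sets.Diff)
    ultimately have "(D i - C i) \<union> (C i - D i) \<in> null_sets M"
      using Nnull null_sets_subset by metis
    then have "(\<integral>x\<in>D i. X x \<partial>M) = (\<integral>x\<in>C i. X x \<partial>M)"
      by (rule set_integral_null_delta[OF X Ds Cs'])
    then show ?thesis using m by simp
  qed
  have "AE \<omega> in M. \<forall>A\<in>P. \<omega> \<in> A \<longrightarrow> cond_exp_part M P X \<omega> = (\<integral>x\<in>A. X x \<partial>M) / measure M A"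
    by (rule partition_cond_exp[OF PS P X])
  moreover have "AE \<omega> in M. \<omega> \<notin> N" using Nnull by (rule AE_not_in)
  moreover have "AE \<omega> in M. \<omega> \<in> space M" by (rule AE_space)
  ultimately have "AE \<omega> in M. measure M (C (f \<omega>)) > 0 \<and> cond_exp_part M P X \<omega> =
     (\<integral>x\<in>C (f \<omega>). X x \<partial>M) / measure M (C (f \<omega>))"
  proof eventually_elim
    case (elim \<omega>)
    then have fx: "f \<omega> \<in> I" "\<omega> \<in> C (f \<omega>)" using fI unfolding C_def by auto
    have "f \<omega> \<in> J" using fx elim(2) unfolding N_def by auto
    moreover have "\<omega> \<in> D (f \<omega>)" using fx CD by blast
    ultimately have "D (f \<omega>) \<in> P" "\<omega> \<in> D (f \<omega>)" unfolding P_def by auto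
    then have "cond_exp_part M P X \<omega> = (\<integral>x\<in>D (f \<omega>). X x \<partial>M) / measure M (D (f \<omega>))"
      using elim(1) by blast
    moreover have "measure M (C (f \<omega>)) > 0" using \<open>f \<omega> \<in> J\<close> unfolding J_def by blast
    ultimately show ?case using avgD[of "f \<omega>"] by simp
  qed
  then show ?thesis unfolding C_def by (intro bexI[OF _ P])
qed



lemma orl_convex: "orlicz_function \<Phi> \<Longrightarrow> convex_on {0..} \<Phi>"
  and orl_mono: "orlicz_function \<Phi> \<Longrightarrow> mono_on {0..} \<Phi>"
  and orl_zero: "orlicz_function \<Phi> \<Longrightarrow> \<Phi> 0 = 0"
  and orl_superlin: "orlicz_function \<Phi> \<Longrightarrow> filterlim (\<lambda>t. \<Phi> t / t) at_top at_top"
  unfolding orlicz_function_def by auto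

lemma orl_mono': "orlicz_function \<Phi> \<Longrightarrow> 0 \<le> s \<Longrightarrow> s \<le> t \<Longrightarrow> \<Phi> s \<le> \<Phi> t"
  using orl_mono by (metis atLeast_iff mono_onD order_trans)

lemma orl_nonneg: "orlicz_function \<Phi> \<Longrightarrow> 0 \<le> t \<Longrightarrow> 0 \<le> \<Phi> t"
  using orl_mono'[of \<Phi> 0 t] orl_zero[of \<Phi>] by simp

lemma orl_scale:
  assumes "orlicz_function \<Phi>" "0 \<le> t" "0 \<le> s" "s \<le> 1"
  shows "\<Phi> (s * t) \<le> s * \<Phi> t"
proof -
  have "\<Phi> ((1 - s) *\<^sub>R 0 + s *\<^sub>R t) \<le> (1 - s) * \<Phi> 0 + s * \<Phi> t"
    using orl_convex[OF assms(1)] assms(2-4) by (intro convex_onD) auto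
  then show ?thesis using orl_zero[OF assms(1)] by simp
qed

lemma orl_borel:
  assumes "orlicz_function \<Phi>" "f \<in> borel_measurable M" "c > 0"
  shows "(\<lambda>\<omega>. \<Phi> (\<bar>f \<omega>\<bar> / c)) \<in> borel_measurable M"
proof -
  have m: "mono (\<lambda>t. \<Phi> (max 0 t))"
    unfolding mono_def using orl_mono'[OF assms(1)] by (simp add: max.coboundedI1)
  have "(\<lambda>t. \<Phi> (max 0 t)) \<in> borel_measurable borel" by (rule borel_measurable_mono[OF m])
  then have "(\<lambda>\<omega>. \<Phi> (max 0 (\<bar>f \<omega>\<bar> / c))) \<in> borel_measurable M"
    using assms(2) by measurable
  moreover have "max 0 (\<bar>f \<omega>\<bar> / c) = \<bar>f \<omega>\<bar> / c" for \<omega>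
    using assms(3) by simp
  ultimately show ?thesis by simp
qed

lemma in_orlicz_intro:
  assumes orl: "orlicz_function \<Phi>" and Zm: "Z \<in> borel_measurable M" and c0: "c0 > 0"
    and B: "(\<integral>\<^sup>+\<omega>. ennreal (\<Phi> (\<bar>Z \<omega>\<bar> / c0)) \<partial>M) \<le> ennreal B"
  shows "in_orlicz M \<Phi> Z"
proof -
  define l where "l = max 1 B"
  have l1: "l \<ge> 1" unfolding l_def by simp
  have "(\<integral>\<^sup>+\<omega>. ennreal (\<Phi> (\<bar>Z \<omega>\<bar> / (c0 * l))) \<partial>M) \<le> (\<integral>\<^sup>+\<omega>. ennreal (1 / l) * ennreal (\<Phi> (\<bar>Z \<omega>\<bar> / c0)) \<partial>M)"
  proof (rule nn_integral_mono)
    fix \<omega>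
    have "\<Phi> ((1 / l) * (\<bar>Z \<omega>\<bar> / c0)) \<le> (1 / l) * \<Phi> (\<bar>Z \<omega>\<bar> / c0)"
      using l1 c0 by (intro orl_scale[OF orl]) auto
    moreover have "(1 / l) * (\<bar>Z \<omega>\<bar> / c0) = \<bar>Z \<omega>\<bar> / (c0 * l)" by simp
    ultimately show "ennreal (\<Phi> (\<bar>Z \<omega>\<bar> / (c0 * l))) \<le> ennreal (1 / l) * ennreal (\<Phi> (\<bar>Z \<omega>\<bar> / c0))"
      using l1 c0 orl_nonneg[OF orl, of "\<bar>Z \<omega>\<bar> / c0"] by (simp add: ennreal_mult'[symmetric] mult.commute)
  qed
  also have "\<dots> = ennreal (1 / l) * (\<integral>\<^sup>+\<omega>. ennreal (\<Phi> (\<bar>Z \<omega>\<bar> / c0)) \<partial>M)"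
    by (rule nn_integral_cmult) (use orl_borel[OF orl Zm c0] in simp)
  also have "\<dots> \<le> ennreal (1 / l) * ennreal B" by (rule mult_left_mono[OF B]) simp
  also have "\<dots> \<le> 1"
  proof (cases "B \<ge> 0")
    case True
    then have "ennreal (1 / l) * ennreal B = ennreal (B / l)" using l1 by (simp add: ennreal_mult'[symmetric])
    moreover have "B / l \<le> 1" using l1 unfolding l_def by (simp add: divide_le_eq)
    ultimately show ?thesis by (simp add: ennreal_le_1)
  next
    case False
    then show ?thesis by (simp add: ennreal_neg)
  qed
  finally have fin: "(\<integral>\<^sup>+\<omega>. ennreal (\<Phi> (\<bar>Z \<omega>\<bar> / (c0 * l))) \<partial>M) \<le> 1" .
  have "c0 * l > 0" using c0 l1 by simp
  then show ?thesis unfolding in_orlicz_def using Zm fin by blast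
qed

lemma orlicz_integrable:
  assumes orl: "orlicz_function \<Phi>" and PS: "prob_space M" and X: "in_orlicz M \<Phi> X"
  obtains c where "c > 0" "integrable M (\<lambda>\<omega>. \<Phi> (\<bar>X \<omega>\<bar> / c))" "integrable M X"
    "(\<integral>\<^sup>+\<omega>. ennreal (\<Phi> (\<bar>X \<omega>\<bar> / c)) \<partial>M) \<le> 1"
proof -
  interpret prob_space M by fact
  obtain c where Xm: "X \<in> borel_measurable M" and c: "c > 0"
    and int1: "(\<integral>\<^sup>+\<omega>. ennreal (\<Phi> (\<bar>X \<omega>\<bar> / c)) \<partial>M) \<le> 1"
    using X unfolding in_orlicz_def by blast
  define Y where "Y \<omega> = \<Phi> (\<bar>X \<omega>\<bar> / c)" for \<omega>
  have Ym: "Y \<in> borel_measurable M" unfolding Y_def by (rule orl_borel[OF orl Xm c])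
  have Ynn: "Y \<omega> \<ge> 0" for \<omega> unfolding Y_def using c by (intro orl_nonneg[OF orl]) simp
  have Yint: "integrable M Y"
  proof (rule integrableI_bounded[OF Ym])
    have "(\<integral>\<^sup>+\<omega>. ennreal (norm (Y \<omega>)) \<partial>M) = (\<integral>\<^sup>+\<omega>. ennreal (Y \<omega>) \<partial>M)"
      using Ynn by simp
    also have "\<dots> \<le> 1" using int1 unfolding Y_def .
    finally have le1: "(\<integral>\<^sup>+\<omega>. ennreal (norm (Y \<omega>)) \<partial>M) \<le> 1" .
    have lt: "(1::ennreal) < \<infinity>" by simp
    show "(\<integral>\<^sup>+\<omega>. ennreal (norm (Y \<omega>)) \<partial>M) < \<infinity>"
      by (rule le_less_trans[OF le1 lt])
  qed
  have "eventually (\<lambda>t. \<Phi> t / t \<ge> 1) at_top"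
    using orl_superlin[OF orl] by (simp add: filterlim_at_top)
  then obtain t0 where t0: "\<And>t. t \<ge> t0 \<Longrightarrow> \<Phi> t / t \<ge> 1"
    unfolding eventually_at_top_linorder by blast
  define t1 where "t1 = max 1 t0"
  have t1: "t1 \<ge> 1" "t1 \<ge> t0" unfolding t1_def by auto
  have bound: "norm (X \<omega>) \<le> c * t1 + c * Y \<omega>" for \<omega>
  proof (cases "\<bar>X \<omega>\<bar> / c \<ge> t1")
    case True
    then have pos: "\<bar>X \<omega>\<bar> / c > 0" using t1 by linarith
    have "\<Phi> (\<bar>X \<omega>\<bar> / c) / (\<bar>X \<omega>\<bar> / c) \<ge> 1" using True t1 by (intro t0) linarith
    then have "\<bar>X \<omega>\<bar> / c \<le> Y \<omega>" unfolding Y_def using pos_le_divide_eq[OF pos] by simp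
    then have "\<bar>X \<omega>\<bar> \<le> c * Y \<omega>" using c by (simp add: divide_le_eq mult.commute)
    then show ?thesis using c t1 by (simp add: add_increasing)
  next
    case False
    then have "\<bar>X \<omega>\<bar> / c < t1" by simp
    then have "\<bar>X \<omega>\<bar> \<le> c * t1" using c by (simp add: pos_divide_less_eq mult.commute)
    then show ?thesis using c Ynn[of \<omega>] by (simp add: add_increasing2)
  qed
  have bi: "integrable M (\<lambda>\<omega>. c * t1 + c * Y \<omega>)" using Yint by simp
  have "AE \<omega> in M. norm (X \<omega>) \<le> norm (c * t1 + c * Y \<omega>)"
  proof (rule AE_I2)
    fix \<omega> show "norm (X \<omega>) \<le> norm (c * t1 + c * Y \<omega>)"
      using bound[of \<omega>] abs_ge_self[of "c * t1 + c * Y \<omega>"] by simp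
  qed
  then have "integrable M X"
    by (rule Bochner_Integration.integrable_bound[OF bi Xm])
  from that[OF c Yint[unfolded Y_def] this int1] show ?thesis .
qed



lemma tail_jensen:
  assumes PS: "prob_space M" and orl: "orlicz_function \<Phi>" and c: "c > 0"
    and Xm: "X \<in> borel_measurable M" and Xint: "integrable M X"
    and Yint: "integrable M (\<lambda>\<omega>. \<Phi> (\<bar>X \<omega>\<bar> / c))"
    and T: "T = {\<omega>\<in>space M. \<bar>X \<omega>\<bar> \<ge> K}" and K: "K > 0"
  shows "\<Phi> (\<bar>(\<integral>x\<in>T. X x \<partial>M) / measure M T\<bar> / c) * measure M T
          \<le> (\<integral>x\<in>T. \<Phi> (\<bar>X x\<bar> / c) \<partial>M)"
proof -
  interpret prob_space M by fact
  define Y where "Y x = \<Phi> (\<bar>X x\<bar> / c)" for x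
  have Ym: "Y \<in> borel_measurable M" unfolding Y_def by (rule orl_borel[OF orl Xm c])
  have Ynn: "Y x \<ge> 0" for x unfolding Y_def using c by (intro orl_nonneg[OF orl]) simp
  have Tm: "T \<in> sets M" unfolding T using Xm by measurable
  define m where "m = measure M T"
  have RHSnn: "0 \<le> (\<integral>x\<in>T. Y x \<partial>M)"
    unfolding set_lebesgue_integral_def by (rule Bochner_Integration.integral_nonneg) (use Ynn in \<open>simp add: indicator_def\<close>)
  show ?thesis
  proof (cases "m = 0")
    case True
    then show ?thesis using RHSnn unfolding m_def Y_def by simp
  next
    case False
    then have mpos: "m > 0" unfolding m_def by (simp add: measure_nonneg less_le)
    define g where "g x = indicator T x / m" for x
    have gm: "g \<in> borel_measurable M" unfolding g_def using Tm by measurable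
    have gnn: "g x \<ge> 0" for x unfolding g_def using mpos by simp
    define U where "U = density M (\<lambda>x. ennreal (g x))"
    have PU: "prob_space U"
    proof (rule prob_spaceI)
      have "emeasure U (space U) = (\<integral>\<^sup>+x. ennreal (g x) * indicator (space M) x \<partial>M)"
        unfolding U_def space_density by (rule emeasure_density) (use gm in auto)
      also have "\<dots> = (\<integral>\<^sup>+x. ennreal (1 / m) * indicator T x \<partial>M)"
        by (rule nn_integral_cong) (auto simp: g_def indicator_def)
      also have "\<dots> = ennreal (1 / m) * emeasure M T"
        using Tm by (rule nn_integral_cmult_indicator)
      also have "\<dots> = ennreal (1 / m) * ennreal m" unfolding m_def by (simp add: emeasure_eq_measure)
      also have "\<dots> = 1" using mpos by (simp add: ennreal_mult'[symmetric])
      finally show "emeasure U (space U) = 1" .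
    qed
    define V where "V x = \<bar>X x\<bar> / c" for x
    have Vm: "V \<in> borel_measurable M" unfolding V_def using Xm by measurable
    have eqV: "(\<lambda>x. g x * V x) = (\<lambda>x. (1 / (m * c)) * (\<bar>X x\<bar> * indicator T x))"
      unfolding g_def V_def by (auto simp: indicator_def)
    have eqY: "(\<lambda>x. g x * \<Phi> (V x)) = (\<lambda>x. (1 / m) * (Y x * indicator T x))"
      unfolding g_def V_def Y_def by (auto simp: indicator_def)
    have intV: "integrable M (\<lambda>x. g x * V x)"
      unfolding eqV using Xint Tm by (intro integrable_mult_right integrable_real_mult_indicator) auto
    have intY: "integrable M (\<lambda>x. g x * \<Phi> (V x))"
      unfolding eqY using Yint Tm unfolding Y_def by (intro integrable_mult_right integrable_real_mult_indicator) auto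
    have PhiVm: "(\<lambda>x. \<Phi> (V x)) \<in> borel_measurable M" using Ym unfolding V_def Y_def .
    have UV: "integrable U V" unfolding U_def
      using integrable_density[OF Vm gm] gnn intV by simp
    have UPhiV: "integrable U (\<lambda>x. \<Phi> (V x))" unfolding U_def
      using integrable_density[OF PhiVm gm] gnn intY by simp
    have AEU: "AE x in U. V x \<in> {0<..}"
      unfolding U_def
    proof (subst AE_density)
      show "(\<lambda>x. ennreal (g x)) \<in> borel_measurable M" using gm by simp
      show "AE x in M. 0 < ennreal (g x) \<longrightarrow> V x \<in> {0<..}"
      proof (rule AE_I2, rule impI)
        fix x assume x: "x \<in> space M" "0 < ennreal (g x)"
        then have "x \<in> T" unfolding g_def by (cases "x \<in> T") auto
        then show "V x \<in> {0<..}" unfolding V_def T using K c by auto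
      qed
    qed
    have cvx: "convex_on {0<..} \<Phi>"
      by (rule convex_on_subset[OF orl_convex[OF orl]]) auto
    have J: "\<Phi> (prob_space.expectation U V) \<le> prob_space.expectation U (\<lambda>x. \<Phi> (V x))"
      by (rule prob_space.jensens_inequality[OF PU UV AEU _ UPhiV cvx]) auto
    have EV: "prob_space.expectation U V = (1 / (m * c)) * (\<integral>x. \<bar>X x\<bar> * indicator T x \<partial>M)"
      unfolding U_def using integral_density[OF Vm gm] gnn by (simp add: eqV)
    have EY: "prob_space.expectation U (\<lambda>x. \<Phi> (V x)) = (1 / m) * (\<integral>x. Y x * indicator T x \<partial>M)"
      unfolding U_def using integral_density[OF PhiVm gm] gnn by (simp add: eqY)
    have absb: "\<bar>(\<integral>x\<in>T. X x \<partial>M)\<bar> \<le> (\<integral>x. \<bar>X x\<bar> * indicator T x \<partial>M)"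
    proof -
      have "\<bar>(\<integral>x\<in>T. X x \<partial>M)\<bar> = norm (\<integral>x. indicator T x * X x \<partial>M)"
        unfolding set_lebesgue_integral_def by simp
      also have "\<dots> \<le> (\<integral>x. norm (indicator T x * X x) \<partial>M)" by (rule integral_norm_bound)
      also have "\<dots> = (\<integral>x. \<bar>X x\<bar> * indicator T x \<partial>M)"
        by (rule Bochner_Integration.integral_cong) (auto simp: indicator_def)
      finally show ?thesis .
    qed
    have le1: "\<bar>(\<integral>x\<in>T. X x \<partial>M) / m\<bar> / c \<le> prob_space.expectation U V"
      unfolding EV using absb mpos c by (simp add: field_simps abs_divide)
    have "\<Phi> (\<bar>(\<integral>x\<in>T. X x \<partial>M) / m\<bar> / c) \<le> \<Phi> (prob_space.expectation U V)"
      by (rule orl_mono'[OF orl _ le1]) (use c in simp)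
    also have "\<dots> \<le> (1 / m) * (\<integral>x. Y x * indicator T x \<partial>M)" using J EY by simp
    finally have "\<Phi> (\<bar>(\<integral>x\<in>T. X x \<partial>M) / m\<bar> / c) * m \<le> (\<integral>x. Y x * indicator T x \<partial>M)"
      using mpos by (simp add: field_simps)
    then show ?thesis unfolding m_def Y_def set_lebesgue_integral_def by (simp add: mult.commute)
  qed
qed



lemma avg_bounds:
  assumes PS: "prob_space M" and A: "A \<in> sets M" and mA: "measure M A > 0"
    and X: "integrable M X" and b: "\<And>y. y \<in> A \<Longrightarrow> lo \<le> X y \<and> X y \<le> hi"
  shows "lo \<le> (\<integral>y\<in>A. X y \<partial>M) / measure M A \<and> (\<integral>y\<in>A. X y \<partial>M) / measure M A \<le> hi"
proof -
  interpret prob_space M by fact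
  have si: "set_integrable M A X" unfolding set_integrable_def by (rule integrable_mult_indicator[OF A X])
  have sc: "set_integrable M A (\<lambda>_. r)" for r
    unfolding set_integrable_def by (rule integrable_indicator[OF A]) (simp add: less_top[symmetric])
  have c: "(\<integral>y\<in>A. r \<partial>M) = measure M A * r" for r
    using A by (subst set_integral_const) auto
  have "(\<integral>y\<in>A. lo \<partial>M) \<le> (\<integral>y\<in>A. X y \<partial>M)"
    by (rule set_integral_mono[OF sc si]) (use b in blast)
  moreover have "(\<integral>y\<in>A. X y \<partial>M) \<le> (\<integral>y\<in>A. hi \<partial>M)"
    by (rule set_integral_mono[OF si sc]) (use b in blast)
  ultimately have "measure M A * lo \<le> (\<integral>y\<in>A. X y \<partial>M)" "(\<integral>y\<in>A. X y \<partial>M) \<le> measure M A * hi"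
    unfolding c by simp_all
  then show ?thesis using mA by (simp add: pos_le_divide_eq pos_divide_le_eq mult.commute)
qed

lemma tail_tendsto:
  fixes X Y :: "'a \<Rightarrow> real"
  assumes Xm: "X \<in> borel_measurable M" and Ym: "Y \<in> borel_measurable M" and Yint: "integrable M Y"
    and Ynn: "\<And>x. Y x \<ge> 0"
  shows "(\<lambda>K::nat. (\<integral>x. Y x * indicator {\<omega>\<in>space M. real K \<le> \<bar>X \<omega>\<bar>} x \<partial>M)) \<longlonglongrightarrow> 0"
proof -
  have "(\<lambda>K::nat. (\<integral>x. Y x * indicator {\<omega>\<in>space M. real K \<le> \<bar>X \<omega>\<bar>} x \<partial>M)) \<longlonglongrightarrow> (\<integral>x. 0 \<partial>M)"
  proof (rule integral_dominated_convergence[where w = Y])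
    show "(\<lambda>x. 0::real) \<in> borel_measurable M" by simp
    show "(\<lambda>x. Y x * indicator {\<omega>\<in>space M. real K \<le> \<bar>X \<omega>\<bar>} x) \<in> borel_measurable M" for K :: nat
      using Xm Ym by measurable
    show "integrable M Y" by fact
    show "AE x in M. (\<lambda>K::nat. Y x * indicator {\<omega>\<in>space M. real K \<le> \<bar>X \<omega>\<bar>} x) \<longlonglongrightarrow> 0"
    proof (rule AE_I2)
      fix x assume x: "x \<in> space M"
      have "eventually (\<lambda>K::nat. Y x * indicator {\<omega>\<in>space M. real K \<le> \<bar>X \<omega>\<bar>} x = 0) sequentially"
      proof (rule eventually_sequentiallyI[of "nat \<lceil>\<bar>X x\<bar>\<rceil> + 1"])
        fix K :: nat assume "nat \<lceil>\<bar>X x\<bar>\<rceil> + 1 \<le> K"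
        then have "\<bar>X x\<bar> < real K" by linarith
        then show "Y x * indicator {\<omega>\<in>space M. real K \<le> \<bar>X \<omega>\<bar>} x = 0" by (simp add: indicator_def)
      qed
      then show "(\<lambda>K::nat. Y x * indicator {\<omega>\<in>space M. real K \<le> \<bar>X \<omega>\<bar>} x) \<longlonglongrightarrow> 0"
        by (rule tendsto_eventually)
    qed
    show "AE x in M. norm (Y x * indicator {\<omega>\<in>space M. real K \<le> \<bar>X \<omega>\<bar>} x) \<le> Y x" for K :: nat
      by (rule AE_I2) (use Ynn in \<open>simp add: indicator_def\<close>)
  qed
  then show ?thesis by simp
qed

lemma single_le_suminf_ennreal: "f i \<le> (\<Sum>i. f i :: ennreal)"
  by (metis ennreal_suminf_lessD not_le less_irrefl)



lemma max3_phi: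
  fixes P :: "real \<Rightarrow> real"
  assumes "0 \<le> P a" "0 \<le> P b" "0 \<le> P d"
  shows "P (max a (max b d)) \<le> P a + P b + P d"
  using assms unfolding max_def by auto

lemma ennreal_mult_indicator: "ennreal (a * indicator T x) = ennreal a * indicator T x"
  by (simp add: indicator_def)

theorem proposition3p4:
  fixes M :: "'a measure" and \<Phi> :: "real \<Rightarrow> real" and X :: "'a \<Rightarrow> real"
  assumes "prob_space M" and "nonatomic M" and "orlicz_function \<Phi>"
    and "in_orlicz M \<Phi> X"
  shows "\<exists>\<pi> :: nat \<Rightarrow> 'a set set. (\<forall>n. \<pi> n \<in> fin_partitions M) \<and>
           (AE \<omega> in M. (\<lambda>n. cond_exp_part M (\<pi> n) X \<omega>) \<longlonglongrightarrow> X \<omega>) \<and>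
           (\<exists>Z. in_orlicz M \<Phi> Z \<and>
                (\<forall>n. AE \<omega> in M. \<bar>cond_exp_part M (\<pi> n) X \<omega>\<bar> \<le> Z \<omega>))"
proof -
  interpret prob_space M by fact
  note orl = assms(3)
  have Xm: "X \<in> borel_measurable M" using assms(4) unfolding in_orlicz_def by blast
  obtain c where c: "c > 0" and Yint0: "integrable M (\<lambda>\<omega>. \<Phi> (\<bar>X \<omega>\<bar> / c))" and Xint: "integrable M X"
    and int1: "(\<integral>\<^sup>+\<omega>. ennreal (\<Phi> (\<bar>X \<omega>\<bar> / c)) \<partial>M) \<le> 1"
    using orlicz_integrable[OF orl assms(1) assms(4)] by blast
  define Y where "Y \<omega> = \<Phi> (\<bar>X \<omega>\<bar> / c)" for \<omega>
  have Ym: "Y \<in> borel_measurable M" unfolding Y_def by (rule orl_borel[OF orl Xm c])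
  have Ynn: "Y x \<ge> 0" for x unfolding Y_def using c by (intro orl_nonneg[OF orl]) simp
  have Yint: "integrable M Y" using Yint0 unfolding Y_def .
  define tl where "tl K = {\<omega>\<in>space M. real K \<le> \<bar>X \<omega>\<bar>}" for K :: nat
  have tlm: "tl K \<in> sets M" for K unfolding tl_def using Xm by measurable
  define tint where "tint K = (\<integral>x. Y x * indicator (tl K) x \<partial>M)" for K
  have tlim: "tint \<longlonglongrightarrow> 0"
    unfolding tint_def tl_def by (rule tail_tendsto[OF Xm Ym Yint Ynn])
  have "\<forall>n. \<exists>K0. \<forall>K\<ge>K0. tint K < (1/2)^Suc n"
  proof
    fix n
    have "eventually (\<lambda>K. tint K < (1/2)^Suc n) sequentially"
      by (rule order_tendstoD(2)[OF tlim]) simp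
    then show "\<exists>K0. \<forall>K\<ge>K0. tint K < (1/2)^Suc n" unfolding eventually_sequentially .
  qed
  then obtain Ke where Ke: "\<And>n K. K \<ge> Ke n \<Longrightarrow> tint K < (1/2)^Suc n" by metis
  define avg where "avg K = (\<integral>x\<in>tl K. X x \<partial>M) / measure M (tl K)" for K
  define b where "b K = \<bar>avg K\<bar>" for K
  have bnn: "b K \<ge> 0" for K unfolding b_def by simp
  have jen: "\<Phi> (b K / c) * measure M (tl K) \<le> tint K" if "K \<ge> 1" for K
  proof -
    have "\<Phi> (\<bar>(\<integral>x\<in>tl K. X x \<partial>M) / measure M (tl K)\<bar> / c) * measure M (tl K)
       \<le> (\<integral>x\<in>tl K. \<Phi> (\<bar>X x\<bar> / c) \<partial>M)"
      by (rule tail_jensen[OF assms(1) orl c Xm Xint Yint0 tl_def]) (use that in simp)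
    moreover have "(\<integral>x\<in>tl K. \<Phi> (\<bar>X x\<bar> / c) \<partial>M) = tint K"
      unfolding tint_def set_lebesgue_integral_def Y_def by (simp add: mult.commute)
    ultimately show ?thesis unfolding b_def avg_def by simp
  qed
  define Ks where "Ks = rec_nat (max 1 (Ke 0)) (\<lambda>n k. max (k+1) (max (nat \<lceil>b k\<rceil>) (Ke (Suc n))))"
  have Ks0: "Ks 0 = max 1 (Ke 0)" unfolding Ks_def by simp
  have KsS: "Ks (Suc n) = max (Ks n + 1) (max (nat \<lceil>b (Ks n)\<rceil>) (Ke (Suc n)))" for n
    unfolding Ks_def by simp
  have Ks_ge1: "Ks n \<ge> 1" for n by (cases n) (simp_all add: Ks0 KsS)
  have Ks_Ke: "Ks n \<ge> Ke n" for n by (cases n) (simp_all add: Ks0 KsS)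
  have Ks_smono: "strict_mono Ks"
    by (rule strict_monoI_Suc) (simp add: KsS)
  have Ks_mono: "m \<le> n \<Longrightarrow> Ks m \<le> Ks n" for m n using Ks_smono by (simp add: strict_mono_less_eq)
  have Ks_ge: "n \<le> Ks n" for n by (rule seq_suble[OF Ks_smono])
  have Ks_b: "b (Ks n) \<le> real (Ks (Suc n))" for n
  proof -
    have h1: "b (Ks n) \<le> real (nat \<lceil>b (Ks n)\<rceil>)" by (rule real_nat_ceiling_ge)
    have h2: "nat \<lceil>b (Ks n)\<rceil> \<le> Ks (Suc n)" unfolding KsS by (rule max.coboundedI2) simp
    show ?thesis using h1 of_nat_mono[OF h2, where 'a=real] by linarith
  qed
  have tint_small: "tint (Ks n) < (1/2)^Suc n" for n using Ke Ks_Ke by blast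
  define R where "R n = int (Ks n) * 2^n" for n
  define fi where "fi n \<omega> = (if \<bar>X \<omega>\<bar> < real (Ks n) then \<lfloor>X \<omega> * 2^n\<rfloor> else R n + 1)" for n \<omega>
  have small_floor: "\<lfloor>X \<omega> * 2^n\<rfloor> < R n" if "\<bar>X \<omega>\<bar> < real (Ks n)" for \<omega> n
  proof -
    have "X \<omega> * 2^n < real (Ks n) * 2^n" using that by (intro mult_strict_right_mono) auto
    then have "X \<omega> * 2^n < of_int (R n)" unfolding R_def by simp
    then show ?thesis by linarith
  qed
  have fiI: "fi n \<omega> \<in> {- R n .. R n + 1}" if "\<omega> \<in> space M" for n \<omega>
  proof (cases "\<bar>X \<omega>\<bar> < real (Ks n)")
    case True
    have "- (real (Ks n) * 2^n) < X \<omega> * 2^n" using True by (intro mult_strict_right_mono[of "- real (Ks n)", simplified]) auto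
    then have "of_int (- R n) \<le> X \<omega> * 2^n" unfolding R_def by simp
    then have "- R n \<le> \<lfloor>X \<omega> * 2^n\<rfloor>" by linarith
    moreover have "\<lfloor>X \<omega> * 2^n\<rfloor> < R n" by (rule small_floor[OF True])
    ultimately show ?thesis using True unfolding fi_def by simp
  next
    case False
    have "R n \<ge> 0" unfolding R_def by simp
    then show ?thesis using False unfolding fi_def by simp
  qed
  have fiS: "{\<omega>\<in>space M. fi n \<omega> = i} \<in> sets M" for n i
  proof -
    have "{\<omega>\<in>space M. fi n \<omega> = i} = {\<omega>\<in>space M. (\<bar>X \<omega>\<bar> < real (Ks n) \<and> of_int i \<le> X \<omega> * 2^n \<and> X \<omega> * 2^n < of_int i + 1)
        \<or> (\<not> \<bar>X \<omega>\<bar> < real (Ks n) \<and> i = R n + 1)}"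
      unfolding fi_def by (intro Collect_cong) (auto simp: floor_eq_iff)
    also have "\<dots> \<in> sets M" using Xm by measurable
    finally show ?thesis .
  qed
  have "\<forall>n. \<exists>P. P \<in> fin_partitions M \<and> (AE \<omega> in M. measure M {y\<in>space M. fi n y = fi n \<omega>} > 0 \<and>
      cond_exp_part M P X \<omega> = (\<integral>x\<in>{y\<in>space M. fi n y = fi n \<omega>}. X x \<partial>M) / measure M {y\<in>space M. fi n y = fi n \<omega>})"
  proof
    fix n
    show "\<exists>P. P \<in> fin_partitions M \<and> (AE \<omega> in M. measure M {y\<in>space M. fi n y = fi n \<omega>} > 0 \<and>
      cond_exp_part M P X \<omega> = (\<integral>x\<in>{y\<in>space M. fi n y = fi n \<omega>}. X x \<partial>M) / measure M {y\<in>space M. fi n y = fi n \<omega>})"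
      using index_partition_cond_exp[OF assms(1) finite_atLeastAtMost_int fiI fiS Xint, of n]
      by (simp only: Bex_def)
  qed
  from choice[OF this] obtain \<pi> where \<pi>all: "\<forall>n. \<pi> n \<in> fin_partitions M \<and> (AE \<omega> in M. measure M {y\<in>space M. fi n y = fi n \<omega>} > 0 \<and>
      cond_exp_part M (\<pi> n) X \<omega> = (\<integral>x\<in>{y\<in>space M. fi n y = fi n \<omega>}. X x \<partial>M) / measure M {y\<in>space M. fi n y = fi n \<omega>})"
    by (elim exE)
  have \<pi>: "\<And>n. \<pi> n \<in> fin_partitions M"
    and \<pi>AE: "\<And>n. AE \<omega> in M. measure M {y\<in>space M. fi n y = fi n \<omega>} > 0 \<and>
      cond_exp_part M (\<pi> n) X \<omega> = (\<integral>x\<in>{y\<in>space M. fi n y = fi n \<omega>}. X x \<partial>M) / measure M {y\<in>space M. fi n y = fi n \<omega>}"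
    using \<pi>all by simp_all
  have cellL: "\<bar>X y - X \<omega>\<bar> \<le> (1/2)^n"
    if "\<bar>X \<omega>\<bar> < real (Ks n)" "y \<in> {y\<in>space M. fi n y = fi n \<omega>}" for \<omega> y n
  proof -
    have fw: "fi n \<omega> = \<lfloor>X \<omega> * 2^n\<rfloor>" using that(1) unfolding fi_def by simp
    have fyw: "fi n y = fi n \<omega>" using that(2) by simp
    have yl: "\<bar>X y\<bar> < real (Ks n)"
    proof (rule ccontr)
      assume "\<not> \<bar>X y\<bar> < real (Ks n)"
      then have "fi n y = R n + 1" unfolding fi_def by simp
      then have "R n + 1 = \<lfloor>X \<omega> * 2^n\<rfloor>" using fyw fw by simp
      then show False using small_floor[OF that(1)] by simp
    qed
    have fy: "fi n y = \<lfloor>X y * 2^n\<rfloor>" using yl unfolding fi_def by simp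
    have eq: "\<lfloor>X y * 2^n\<rfloor> = \<lfloor>X \<omega> * 2^n\<rfloor>" using fyw fw fy by simp
    have f1: "of_int \<lfloor>X y * 2^n\<rfloor> \<le> X y * 2^n" "X y * 2^n < of_int \<lfloor>X y * 2^n\<rfloor> + 1"
      by (rule of_int_floor_le, rule real_of_int_floor_add_one_gt)
    have f2: "of_int \<lfloor>X \<omega> * 2^n\<rfloor> \<le> X \<omega> * 2^n" "X \<omega> * 2^n < of_int \<lfloor>X \<omega> * 2^n\<rfloor> + 1"
      by (rule of_int_floor_le, rule real_of_int_floor_add_one_gt)
    have "\<bar>X y * 2^n - X \<omega> * 2^n\<bar> < 1" using f1 f2 eq by linarith
    moreover have "X y * 2^n - X \<omega> * 2^n = (X y - X \<omega>) * 2^n" by (simp add: left_diff_distrib)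
    ultimately have "\<bar>X y - X \<omega>\<bar> * 2^n < 1" by (simp add: abs_mult)
    then have "\<bar>X y - X \<omega>\<bar> < 1 / 2^n" by (simp add: pos_less_divide_eq)
    then show ?thesis by (simp add: power_one_over)
  qed
  have cellT: "{y\<in>space M. fi n y = fi n \<omega>} = tl (Ks n)" if "\<not> \<bar>X \<omega>\<bar> < real (Ks n)" for \<omega> n
  proof -
    have fw: "fi n \<omega> = R n + 1" using that unfolding fi_def by simp
    have iff: "fi n y = R n + 1 \<longleftrightarrow> \<not> \<bar>X y\<bar> < real (Ks n)" for y
    proof
      assume a: "fi n y = R n + 1"
      show "\<not> \<bar>X y\<bar> < real (Ks n)"
      proof
        assume yl: "\<bar>X y\<bar> < real (Ks n)"
        then have "fi n y = \<lfloor>X y * 2^n\<rfloor>" unfolding fi_def by simp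
        then show False using a small_floor[OF yl] by simp
      qed
    next
      assume "\<not> \<bar>X y\<bar> < real (Ks n)"
      then show "fi n y = R n + 1" unfolding fi_def by simp
    qed
    show ?thesis unfolding fw tl_def iff by (simp add: not_less)
  qed
  define Nf where "Nf \<omega> = (LEAST m. \<bar>X \<omega>\<bar> < real (Ks (Suc m)))" for \<omega>
  define W where "W \<omega> = (if \<bar>X \<omega>\<bar> < real (Ks 0) then 0 else b (Ks (Nf \<omega>)))" for \<omega>
  define Z where "Z \<omega> = \<bar>X \<omega>\<bar> + 1 + W \<omega>" for \<omega>
  have Wnn: "W \<omega> \<ge> 0" for \<omega> unfolding W_def using bnn by simp
  have exN: "\<exists>m. \<bar>X \<omega>\<bar> < real (Ks (Suc m))" for \<omega>
  proof
    have "\<bar>X \<omega>\<bar> < real (Suc (nat \<lceil>\<bar>X \<omega>\<bar>\<rceil>))" by linarith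
    also have "\<dots> \<le> real (Ks (Suc (nat \<lceil>\<bar>X \<omega>\<bar>\<rceil>)))" using Ks_ge by (rule of_nat_mono)
    finally show "\<bar>X \<omega>\<bar> < real (Ks (Suc (nat \<lceil>\<bar>X \<omega>\<bar>\<rceil>)))" .
  qed
  have NfI: "\<bar>X \<omega>\<bar> < real (Ks (Suc (Nf \<omega>)))" for \<omega>
    unfolding Nf_def by (rule LeastI_ex[OF exN])
  have Nf_min: "\<not> \<bar>X \<omega>\<bar> < real (Ks (Suc m))" if "m < Nf \<omega>" for \<omega> m
    using not_less_Least[OF that[unfolded Nf_def]] .
  have Nf_tl: "real (Ks (Nf \<omega>)) \<le> \<bar>X \<omega>\<bar>" if "\<not> \<bar>X \<omega>\<bar> < real (Ks 0)" for \<omega>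
  proof (cases "Nf \<omega>")
    case 0
    then show ?thesis using that by simp
  next
    case (Suc m)
    then have "\<not> \<bar>X \<omega>\<bar> < real (Ks (Suc m))" using Nf_min[of m \<omega>] by simp
    then show ?thesis using Suc by simp
  qed
  have W_dom: "b (Ks n) \<le> \<bar>X \<omega>\<bar> + W \<omega>" if nle: "real (Ks n) \<le> \<bar>X \<omega>\<bar>" for \<omega> n
  proof -
    have "n \<le> Nf \<omega>"
    proof (rule ccontr)
      assume "\<not> n \<le> Nf \<omega>"
      then have "Suc (Nf \<omega>) \<le> n" by simp
      then have "real (Ks (Suc (Nf \<omega>))) \<le> real (Ks n)" using Ks_mono by simp
      then show False using NfI[of \<omega>] nle by simp
    qed
    have "real (Ks 0) \<le> real (Ks n)" using Ks_mono by simp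
    then have nl0: "\<not> \<bar>X \<omega>\<bar> < real (Ks 0)" using nle by simp
    then have Weq: "W \<omega> = b (Ks (Nf \<omega>))" unfolding W_def by simp
    show ?thesis
    proof (cases "n = Nf \<omega>")
      case True
      then show ?thesis using Weq by simp
    next
      case False
      then have "n < Nf \<omega>" using \<open>n \<le> Nf \<omega>\<close> by simp
      then have "real (Ks (Suc n)) \<le> \<bar>X \<omega>\<bar>" using Nf_min[of n \<omega>] by simp
      then show ?thesis using Ks_b[of n] Wnn[of \<omega>] by simp
    qed
  qed
  have Nfm: "Nf \<in> measurable M (count_space UNIV)" unfolding Nf_def using Xm by measurable
  have bNm: "(\<lambda>\<omega>. b (Ks (Nf \<omega>))) \<in> borel_measurable M"
    by (rule measurable_compose[OF Nfm]) simp
  have Wm: "W \<in> borel_measurable M" unfolding W_def using Xm bNm by measurable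
  have Zm: "Z \<in> borel_measurable M" unfolding Z_def using Xm Wm by measurable
  have Wpt: "ennreal (\<Phi> (W \<omega> / c)) \<le> (\<Sum>m. ennreal (\<Phi> (b (Ks m) / c) * indicator (tl (Ks m)) \<omega>))"
    if \<omega>: "\<omega> \<in> space M" for \<omega>
  proof (cases "\<bar>X \<omega>\<bar> < real (Ks 0)")
    case True
    then show ?thesis unfolding W_def using orl_zero[OF orl] by simp
  next
    case False
    then have "W \<omega> = b (Ks (Nf \<omega>))" unfolding W_def by simp
    moreover have "\<omega> \<in> tl (Ks (Nf \<omega>))" unfolding tl_def using \<omega> Nf_tl[OF False] by simp
    ultimately have "ennreal (\<Phi> (W \<omega> / c)) = ennreal (\<Phi> (b (Ks (Nf \<omega>)) / c) * indicator (tl (Ks (Nf \<omega>))) \<omega>)"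
      by simp
    also have "\<dots> \<le> (\<Sum>m. ennreal (\<Phi> (b (Ks m) / c) * indicator (tl (Ks m)) \<omega>))"
      by (rule single_le_suminf_ennreal)
    finally show ?thesis .
  qed
  have termb: "(\<integral>\<^sup>+\<omega>. ennreal (\<Phi> (b (Ks m) / c) * indicator (tl (Ks m)) \<omega>) \<partial>M) \<le> ennreal ((1/2)^Suc m)" for m
  proof -
    have pnn: "\<Phi> (b (Ks m) / c) \<ge> 0" using bnn c by (intro orl_nonneg[OF orl]) simp
    have "(\<integral>\<^sup>+\<omega>. ennreal (\<Phi> (b (Ks m) / c) * indicator (tl (Ks m)) \<omega>) \<partial>M)
        = (\<integral>\<^sup>+\<omega>. ennreal (\<Phi> (b (Ks m) / c)) * indicator (tl (Ks m)) \<omega> \<partial>M)"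
      by (simp only: ennreal_mult_indicator)
    also have "\<dots> = ennreal (\<Phi> (b (Ks m) / c)) * emeasure M (tl (Ks m))"
      by (rule nn_integral_cmult_indicator[OF tlm])
    also have "\<dots> = ennreal (\<Phi> (b (Ks m) / c) * measure M (tl (Ks m)))"
      using pnn by (simp add: emeasure_eq_measure ennreal_mult')
    also have "\<dots> \<le> ennreal ((1/2)^Suc m)"
    proof (rule ennreal_leI)
      have "\<Phi> (b (Ks m) / c) * measure M (tl (Ks m)) \<le> tint (Ks m)" using jen Ks_ge1 by blast
      then show "\<Phi> (b (Ks m) / c) * measure M (tl (Ks m)) \<le> (1/2)^Suc m" using tint_small[of m] by simp
    qed
    finally show ?thesis .
  qed
  have intW: "(\<integral>\<^sup>+\<omega>. ennreal (\<Phi> (W \<omega> / c)) \<partial>M) \<le> 1"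
  proof -
    have "(\<integral>\<^sup>+\<omega>. ennreal (\<Phi> (W \<omega> / c)) \<partial>M) \<le> (\<integral>\<^sup>+\<omega>. (\<Sum>m. ennreal (\<Phi> (b (Ks m) / c) * indicator (tl (Ks m)) \<omega>)) \<partial>M)"
      by (rule nn_integral_mono) (rule Wpt)
    also have "\<dots> = (\<Sum>m. (\<integral>\<^sup>+\<omega>. ennreal (\<Phi> (b (Ks m) / c) * indicator (tl (Ks m)) \<omega>) \<partial>M))"
      by (rule nn_integral_suminf) (use tlm in simp)
    also have "\<dots> \<le> (\<Sum>m. ennreal ((1/2)^Suc m))"
      by (rule suminf_le[OF termb summableI summableI])
    also have "\<dots> = ennreal (\<Sum>m. (1/2::real)^Suc m)"
      by (rule suminf_ennreal2) (auto intro: sums_summable[OF power_half_series])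
    also have "\<dots> = 1" using sums_unique[OF power_half_series] by simp
    finally show ?thesis .
  qed
  have Zpt: "ennreal (\<Phi> (\<bar>Z \<omega>\<bar> / (3 * c))) \<le> ennreal (Y \<omega>) + ennreal (\<Phi> (1 / c)) + ennreal (\<Phi> (W \<omega> / c))" for \<omega>
  proof -
    define u where "u = max (\<bar>X \<omega>\<bar> / c) (max (1 / c) (W \<omega> / c))"
    have Zn: "\<bar>Z \<omega>\<bar> = Z \<omega>" unfolding Z_def using Wnn[of \<omega>] by simp
    have "Z \<omega> \<le> 3 * max \<bar>X \<omega>\<bar> (max 1 (W \<omega>))" unfolding Z_def by linarith
    have ueq: "u = max \<bar>X \<omega>\<bar> (max 1 (W \<omega>)) / c" unfolding u_def using c
      by (simp add: max_divide_distrib_right)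
    have "Z \<omega> / (3 * c) \<le> (3 * max \<bar>X \<omega>\<bar> (max 1 (W \<omega>))) / (3 * c)"
      using c \<open>Z \<omega> \<le> 3 * max \<bar>X \<omega>\<bar> (max 1 (W \<omega>))\<close> by (intro divide_right_mono) simp_all
    then have le: "\<bar>Z \<omega>\<bar> / (3 * c) \<le> u" unfolding Zn ueq by simp
    have "\<Phi> (\<bar>Z \<omega>\<bar> / (3 * c)) \<le> \<Phi> u" using c by (intro orl_mono'[OF orl _ le]) simp
    also have "\<dots> \<le> \<Phi> (\<bar>X \<omega>\<bar> / c) + \<Phi> (1 / c) + \<Phi> (W \<omega> / c)"
      unfolding u_def using c Wnn[of \<omega>] by (intro max3_phi orl_nonneg[OF orl]) simp_all
    finally have "\<Phi> (\<bar>Z \<omega>\<bar> / (3 * c)) \<le> Y \<omega> + \<Phi> (1 / c) + \<Phi> (W \<omega> / c)" unfolding Y_def .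
    moreover have "0 \<le> \<Phi> (1 / c)" "0 \<le> \<Phi> (W \<omega> / c)" using c Wnn[of \<omega>] by (simp_all add: orl_nonneg[OF orl])
    ultimately show ?thesis using Ynn[of \<omega>] by (simp add: ennreal_plus[symmetric] del: ennreal_plus)
  qed
  have intZ: "(\<integral>\<^sup>+\<omega>. ennreal (\<Phi> (\<bar>Z \<omega>\<bar> / (3 * c))) \<partial>M) \<le> ennreal (2 + \<Phi> (1 / c))"
  proof -
    have PWm: "(\<lambda>\<omega>. \<Phi> (\<bar>W \<omega>\<bar> / c)) \<in> borel_measurable M" by (rule orl_borel[OF orl Wm c])
    have PWm': "(\<lambda>\<omega>. ennreal (\<Phi> (W \<omega> / c))) \<in> borel_measurable M"
      using PWm Wnn by (simp add: abs_of_nonneg)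
    have "(\<integral>\<^sup>+\<omega>. ennreal (\<Phi> (\<bar>Z \<omega>\<bar> / (3 * c))) \<partial>M) \<le>
        (\<integral>\<^sup>+\<omega>. ennreal (Y \<omega>) + ennreal (\<Phi> (1 / c)) + ennreal (\<Phi> (W \<omega> / c)) \<partial>M)"
      by (rule nn_integral_mono) (rule Zpt)
    also have "\<dots> = (\<integral>\<^sup>+\<omega>. ennreal (Y \<omega>) + ennreal (\<Phi> (1 / c)) \<partial>M) + (\<integral>\<^sup>+\<omega>. ennreal (\<Phi> (W \<omega> / c)) \<partial>M)"
      by (rule nn_integral_add) (use Ym PWm' in simp_all)
    also have "(\<integral>\<^sup>+\<omega>. ennreal (Y \<omega>) + ennreal (\<Phi> (1 / c)) \<partial>M) = (\<integral>\<^sup>+\<omega>. ennreal (Y \<omega>) \<partial>M) + (\<integral>\<^sup>+\<omega>. ennreal (\<Phi> (1 / c)) \<partial>M)"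
      by (rule nn_integral_add) (use Ym in simp_all)
    also have "(\<integral>\<^sup>+\<omega>. ennreal (\<Phi> (1 / c)) \<partial>M) = ennreal (\<Phi> (1 / c))"
      by (simp add: emeasure_space_1)
    also have "(\<integral>\<^sup>+\<omega>. ennreal (Y \<omega>) \<partial>M) \<le> 1" using int1 unfolding Y_def .
    also note intW
    also have "1 + ennreal (\<Phi> (1 / c)) + 1 = ennreal (2 + \<Phi> (1 / c))"
    proof -
      have pc: "0 \<le> \<Phi> (1 / c)" using c by (simp add: orl_nonneg[OF orl])
      have "ennreal (1 + \<Phi> (1 / c) + 1) = ennreal (1 + \<Phi> (1 / c)) + ennreal 1"
        using pc by (intro ennreal_plus) simp_all
      also have "ennreal (1 + \<Phi> (1 / c)) = ennreal 1 + ennreal (\<Phi> (1 / c))"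
        using pc by (intro ennreal_plus) simp_all
      finally have "ennreal (1 + \<Phi> (1 / c) + 1) = 1 + ennreal (\<Phi> (1 / c)) + 1" by simp
      moreover have "1 + \<Phi> (1 / c) + 1 = 2 + \<Phi> (1 / c)" by simp
      ultimately show ?thesis by simp
    qed
    finally show ?thesis by (simp add: add_mono)
  qed
  have Zorl: "in_orlicz M \<Phi> Z"
    by (rule in_orlicz_intro[OF orl Zm _ intZ]) (use c in simp)
  have AEall: "AE \<omega> in M. \<forall>n. measure M {y\<in>space M. fi n y = fi n \<omega>} > 0 \<and>
      cond_exp_part M (\<pi> n) X \<omega> = (\<integral>x\<in>{y\<in>space M. fi n y = fi n \<omega>}. X x \<partial>M) / measure M {y\<in>space M. fi n y = fi n \<omega>}"
    unfolding AE_all_countable by (intro allI \<pi>AE)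
  have near: "\<bar>cond_exp_part M (\<pi> n) X \<omega> - X \<omega>\<bar> \<le> (1/2)^n"
    if \<omega>: "\<omega> \<in> space M" and H: "measure M {y\<in>space M. fi n y = fi n \<omega>} > 0 \<and>
      cond_exp_part M (\<pi> n) X \<omega> = (\<integral>x\<in>{y\<in>space M. fi n y = fi n \<omega>}. X x \<partial>M) / measure M {y\<in>space M. fi n y = fi n \<omega>}"
    and lt: "\<bar>X \<omega>\<bar> < real (Ks n)" for \<omega> n
  proof -
    have "X \<omega> - (1/2)^n \<le> (\<integral>x\<in>{y\<in>space M. fi n y = fi n \<omega>}. X x \<partial>M) / measure M {y\<in>space M. fi n y = fi n \<omega>}
       \<and> (\<integral>x\<in>{y\<in>space M. fi n y = fi n \<omega>}. X x \<partial>M) / measure M {y\<in>space M. fi n y = fi n \<omega>} \<le> X \<omega> + (1/2)^n"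
    proof (rule avg_bounds[OF assms(1) fiS _ Xint])
      show "0 < measure M {y\<in>space M. fi n y = fi n \<omega>}" using H by blast
      fix y assume "y \<in> {y\<in>space M. fi n y = fi n \<omega>}"
      from cellL[OF lt this] show "X \<omega> - (1/2)^n \<le> X y \<and> X y \<le> X \<omega> + (1/2)^n" by linarith
    qed
    then show ?thesis using H by linarith
  qed
  have conv: "AE \<omega> in M. (\<lambda>n. cond_exp_part M (\<pi> n) X \<omega>) \<longlonglongrightarrow> X \<omega>"
    using AEall AE_space
  proof eventually_elim
    case (elim \<omega>)
    have ev: "eventually (\<lambda>n. norm (cond_exp_part M (\<pi> n) X \<omega> - X \<omega>) \<le> (1/2)^n) sequentially"
    proof (rule eventually_sequentiallyI[of "nat \<lceil>\<bar>X \<omega>\<bar>\<rceil> + 1"])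
      fix n assume "nat \<lceil>\<bar>X \<omega>\<bar>\<rceil> + 1 \<le> n"
      then have "\<bar>X \<omega>\<bar> < real n" by linarith
      also have "\<dots> \<le> real (Ks n)" using Ks_ge by (rule of_nat_mono)
      finally have lt: "\<bar>X \<omega>\<bar> < real (Ks n)" .
      show "norm (cond_exp_part M (\<pi> n) X \<omega> - X \<omega>) \<le> (1/2)^n"
        using near[OF elim(2) _ lt] elim(1) by simp
    qed
    have "(\<lambda>n. (1/2::real)^n) \<longlonglongrightarrow> 0" by (rule LIMSEQ_power_zero) simp
    from Lim_null_comparison[OF ev this]
    have "(\<lambda>n. cond_exp_part M (\<pi> n) X \<omega> - X \<omega>) \<longlonglongrightarrow> 0" .
    then have "(\<lambda>n. (cond_exp_part M (\<pi> n) X \<omega> - X \<omega>) + X \<omega>) \<longlonglongrightarrow> 0 + X \<omega>"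
      by (intro tendsto_add tendsto_const)
    then show ?case by simp
  qed
  have dom: "AE \<omega> in M. \<bar>cond_exp_part M (\<pi> n) X \<omega>\<bar> \<le> Z \<omega>" for n
    using \<pi>AE[of n] AE_space
  proof eventually_elim
    case (elim \<omega>)
    show ?case
    proof (cases "\<bar>X \<omega>\<bar> < real (Ks n)")
      case True
      have "\<bar>cond_exp_part M (\<pi> n) X \<omega> - X \<omega>\<bar> \<le> (1/2)^n" by (rule near[OF elim(2) elim(1) True])
      moreover have "(1/2::real)^n \<le> 1" by (simp add: power_le_one)
      ultimately show ?thesis unfolding Z_def using Wnn[of \<omega>] by linarith
    next
      case False
      have "cond_exp_part M (\<pi> n) X \<omega> = avg (Ks n)"
        using elim(1) cellT[OF False] unfolding avg_def by simp
      then have "\<bar>cond_exp_part M (\<pi> n) X \<omega>\<bar> = b (Ks n)" unfolding b_def by simp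
      also have "\<dots> \<le> \<bar>X \<omega>\<bar> + W \<omega>" using False by (intro W_dom) simp
      finally show ?thesis unfolding Z_def by simp
    qed
  qed
  show ?thesis using \<pi> conv Zorl dom by blast
qed

end
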